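(* Let $m\ge1$, $0<\lambda_1\le\dots\le\lambda_m$, $0<\Lambda_0\le\Lambda_1$, and let $a,b$ be positive definite (symmetric) $m\times m$ matrices with $\Lambda_0I\le a,b\le\Lambda_1I$. Then for all $t>0$ and $w,w'\in\mathbb{R}^m$: $\|\widetilde a(t)-\widetilde b(t)\|\le\|\widetilde a(t)-\widetilde b(t)\|_s\le\|a-b\|_s$; $\|\widetilde A(t)-\widetilde B(t)\|\le\Lambda_0^{-2}\|a-b\|_s$; $|\langle w,(\widetilde A(t)-\widetilde B(t))w'\rangle|\le\Lambda_0^{-2}\|w\|\,\|w'\|\,\|a-b\|_s$.
   Context: $a(t)$ has entries $a_{ij}(1-e^{-(\lambda_i+\lambda_j)t})/(\lambda_i+\lambda_j)$; $g(t)$ is diagonal with $g_{ii}(t)=(1-e^{-2\lambda_it})/(2\lambda_i)$, $G(t)=g(t)^{-1}$; $\widetilde a(t)=G(t)^{1/2}a(t)G(t)^{1/2}$, $\widetilde A(t)=\widetilde a(t)^{-1}$; $b(t),\widetilde b(t),\widetilde B(t)$ analogously. $\|\cdot\|$ is the operator norm; $\|c\|_s=\max\{\sup_i\sum_j|c_{ij}|,\sup_j\sum_i|c_{ij}|\}$. *)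

theory Defs
  imports "HOL-Analysis.Analysis"
begin

text \<open>Matrices are real m x m matrices indexed by a finite linearly ordered type 'n
  (so m = CARD('n) >= 1).\<close>

definition amat :: "('n::finite \<Rightarrow> real) \<Rightarrow> real \<Rightarrow> real^'n^'n \<Rightarrow> real^'n^'n" where
  "amat lam t a = (\<chi> i j. a$i$j * (1 - exp (-(lam i + lam j) * t)) / (lam i + lam j))"

definition gmat :: "('n::finite \<Rightarrow> real) \<Rightarrow> real \<Rightarrow> real^'n^'n" where
  "gmat lam t = (\<chi> i j. if i = j then (1 - exp (-(2 * lam i) * t)) / (2 * lam i) else 0)"

definition Gmat :: "('n::finite \<Rightarrow> real) \<Rightarrow> real \<Rightarrow> real^'n^'n" where
  "Gmat lam t = matrix_inv (gmat lam t)"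

definition Gsqrt :: "('n::finite \<Rightarrow> real) \<Rightarrow> real \<Rightarrow> real^'n^'n" where
  "Gsqrt lam t = (\<chi> i j. if i = j then sqrt (Gmat lam t $ i $ i) else 0)"

definition atilde :: "('n::finite \<Rightarrow> real) \<Rightarrow> real \<Rightarrow> real^'n^'n \<Rightarrow> real^'n^'n" where
  "atilde lam t a = Gsqrt lam t ** amat lam t a ** Gsqrt lam t"

definition Atilde :: "('n::finite \<Rightarrow> real) \<Rightarrow> real \<Rightarrow> real^'n^'n \<Rightarrow> real^'n^'n" where
  "Atilde lam t a = matrix_inv (atilde lam t a)"

definition opnorm :: "real^'n^'n \<Rightarrow> real" where
  "opnorm M = onorm (\<lambda>x. M *v x)"

definition snorm :: "real^'n::finite^'n \<Rightarrow> real" where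
  "snorm c = max (Max (range (\<lambda>i. \<Sum>j\<in>UNIV. \<bar>c$i$j\<bar>))) (Max (range (\<lambda>j. \<Sum>i\<in>UNIV. \<bar>c$i$j\<bar>)))"

definition loewner_between :: "real \<Rightarrow> real^'n^'n \<Rightarrow> real \<Rightarrow> bool" where
  "loewner_between L0 a L1 \<longleftrightarrow> (\<forall>x. L0 * (x \<bullet> x) \<le> x \<bullet> (a *v x) \<and> x \<bullet> (a *v x) \<le> L1 * (x \<bullet> x))"

end

theory Submission
  imports Defs
begin


lemma matrix_inv_props:
  fixes A :: "real^'n::finite^'n"
  assumes "invertible A"
  shows "A ** matrix_inv A = mat 1" "matrix_inv A ** A = mat 1"
proof -
  have "\<exists>A'. A ** A' = mat 1 \<and> A' ** A = mat 1" using assms unfolding invertible_def by blast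
  hence "A ** matrix_inv A = mat 1 \<and> matrix_inv A ** A = mat 1"
    unfolding matrix_inv_def by (rule someI_ex)
  thus "A ** matrix_inv A = mat 1" "matrix_inv A ** A = mat 1" by auto
qed

lemma exp_int:
  fixes c t :: real
  assumes c: "0 < c" and t: "0 \<le> t"
  shows "((\<lambda>s. exp (- c * s)) has_integral (1 - exp (- c * t)) / c) {0..t}"
proof -
  have "((\<lambda>s. exp (- c * s)) has_integral ((\<lambda>s. - exp (- c * s) / c) t - (\<lambda>s. - exp (- c * s) / c) 0)) {0..t}"
  proof (rule fundamental_theorem_of_calculus[of 0 t "\<lambda>s. - exp (- c * s) / c" "\<lambda>s. exp (- c * s)"])
    show "0 \<le> t" by (rule t)
    fix x assume "x \<in> {0..t}"
    have "((\<lambda>s. - exp (- c * s) / c) has_real_derivative (exp (- c * x))) (at x within {0..t})"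
      using c by (auto intro!: derivative_eq_intros)
    thus "((\<lambda>s. - exp (- c * s) / c) has_vector_derivative (exp (- c * x))) (at x within {0..t})"
      by (simp add: has_real_derivative_iff_has_vector_derivative)
  qed
  moreover have "(\<lambda>s. - exp (- c * s) / c) t - (\<lambda>s. - exp (- c * s) / c) 0 = (1 - exp (- c * t)) / c"
    by (simp add: diff_divide_distrib)
  ultimately show ?thesis by simp
qed

lemma quad_amat:
  fixes lam :: "'n::finite \<Rightarrow> real" and c :: "real^'n^'n" and x :: "real^'n"
  assumes lp: "\<forall>i. 0 < lam i" and t: "0 \<le> t"
  shows "((\<lambda>s. (\<chi> i. x$i * exp (- lam i * s)) \<bullet> (c *v (\<chi> i. x$i * exp (- lam i * s))))
           has_integral (x \<bullet> (amat lam t c *v x))) {0..t}"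
proof -
  have e: "(\<lambda>s. (\<chi> i. x$i * exp (- lam i * s)) \<bullet> (c *v (\<chi> i. x$i * exp (- lam i * s))))
     = (\<lambda>s. \<Sum>i\<in>UNIV. \<Sum>j\<in>UNIV. (x$i * c$i$j * x$j) * exp (- (lam i + lam j) * s))"
    by (rule ext) (simp add: inner_vec_def matrix_vector_mult_def sum_distrib_left
        algebra_simps exp_add[symmetric])
  have v: "x \<bullet> (amat lam t c *v x) = (\<Sum>i\<in>UNIV. \<Sum>j\<in>UNIV. (x$i * c$i$j * x$j) * ((1 - exp (- (lam i + lam j) * t)) / (lam i + lam j)))"
    by (simp add: inner_vec_def matrix_vector_mult_def amat_def sum_distrib_left algebra_simps)
  show ?thesis unfolding e v
    apply (intro has_integral_sum finite_UNIV has_integral_mult_right exp_int t)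
    using lp by (auto simp add: add_pos_pos)
qed


definition FF :: "('n \<Rightarrow> real) \<Rightarrow> real \<Rightarrow> 'n \<Rightarrow> 'n \<Rightarrow> real" where
  "FF lam t i j = (1 - exp (- (lam i + lam j) * t)) / (lam i + lam j)"

lemma amat_entry: "amat lam t c $ i $ j = c$i$j * FF lam t i j"
  by (simp add: amat_def FF_def)

lemma gmat_entry: "gmat lam t $ i $ j = (if i = j then FF lam t i i else 0)"
proof -
  have "2 * lam i = lam i + lam i" by simp
  thus ?thesis unfolding gmat_def FF_def by simp
qed

lemma FF_pos:
  assumes "\<forall>i. 0 < lam i" "0 < t"
  shows "0 < FF lam t i j"
proof -
  have c: "0 < lam i + lam j" using assms by (simp add: add_pos_pos)
  have h: "0 < (lam i + lam j) * t" using mult_pos_pos[OF c assms(2)] .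
  have "exp (- ((lam i + lam j) * t)) < 1" using h by simp
  hence "exp (- (lam i + lam j) * t) < 1" by (metis minus_mult_left)
  thus ?thesis using c unfolding FF_def by simp
qed

lemma FF_CS:
  assumes lp: "\<forall>i. 0 < lam i" and t: "0 < t"
  shows "(FF lam t i j)^2 \<le> FF lam t i i * FF lam t j j"
proof -
  define p where "p = FF lam t i i"
  define q where "q = FF lam t i j"
  define r where "r = FF lam t j j"
  have ci: "0 < lam i + lam i" "0 < lam i + lam j" "0 < lam j + lam j" using lp by (auto simp: add_pos_pos)
  have I: "((\<lambda>s. q^2 * exp (- (lam i + lam i) * s) - (2*p*q) * exp (- (lam i + lam j) * s)
             + p^2 * exp (- (lam j + lam j) * s)) has_integral (q^2 * p - (2*p*q) * q + p^2 * r)) {0..t}"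
    unfolding p_def q_def r_def FF_def using t ci
    by (intro has_integral_add has_integral_diff has_integral_mult_right exp_int) auto
  have "0 \<le> q^2 * p - (2*p*q) * q + p^2 * r"
  proof (rule has_integral_nonneg[OF I])
    fix s :: real
    have "q^2 * exp (- (lam i + lam i) * s) - (2*p*q) * exp (- (lam i + lam j) * s)
             + p^2 * exp (- (lam j + lam j) * s) = (q * exp (- lam i * s) - p * exp (- lam j * s))^2"
    proof -
      have e1: "exp (- (lam i + lam i) * s) = exp (- lam i * s) * exp (- lam i * s)"
        by (simp add: exp_add[symmetric] algebra_simps)
      have e2: "exp (- (lam i + lam j) * s) = exp (- lam i * s) * exp (- lam j * s)"
        by (simp add: exp_add[symmetric] algebra_simps)
      have e3: "exp (- (lam j + lam j) * s) = exp (- lam j * s) * exp (- lam j * s)"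
        by (simp add: exp_add[symmetric] algebra_simps)
      show ?thesis unfolding e1 e2 e3 by (simp add: power2_eq_square algebra_simps)
    qed
    thus "0 \<le> q^2 * exp (- (lam i + lam i) * s) - (2*p*q) * exp (- (lam i + lam j) * s)
             + p^2 * exp (- (lam j + lam j) * s)" by simp
  qed
  hence "0 \<le> p * (p * r - q^2)" by (simp add: algebra_simps power2_eq_square)
  moreover have "0 < p" unfolding p_def by (rule FF_pos[OF lp t])
  ultimately have "q^2 \<le> p * r" by (simp add: zero_le_mult_iff)
  thus ?thesis unfolding p_def q_def r_def .
qed

lemma diag_mult_entry:
  fixes M :: "real^'n::finite^'n"
  shows "((\<chi> i j. if i = j then d i else 0) ** M ** (\<chi> i j. if i = j then d i else 0)) $ i $ j
     = d i * M$i$j * d j"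
proof -
  have l: "\<And>N::real^'n^'n. \<And> i j. ((\<chi> i j. if i = j then d i else 0) ** N) $ i $ j = d i * N$i$j"
    unfolding matrix_matrix_mult_def
    by (simp add: if_distrib[where f="\<lambda>x. x * _"] cong: if_cong)
  have r: "\<And>N::real^'n^'n. \<And> i j. (N ** (\<chi> i j. if i = j then d i else 0)) $ i $ j = N$i$j * d j"
    unfolding matrix_matrix_mult_def
    by (simp add: if_distrib[where f="\<lambda>x. _ * x"] cong: if_cong)
  show ?thesis by (simp add: r l)
qed

lemma quad_diag:
  fixes M :: "real^'n::finite^'n"
  shows "x \<bullet> (((\<chi> i j. if i = j then d i else 0) ** M ** (\<chi> i j. if i = j then d i else 0)) *v x)
    = (\<chi> i. d i * x$i) \<bullet> (M *v (\<chi> i. d i * x$i))"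
  by (simp add: inner_vec_def matrix_vector_mult_def diag_mult_entry sum_distrib_left algebra_simps)



lemma wcs:
  fixes m y :: "'a \<Rightarrow> real"
  assumes "finite A"
  shows "(\<Sum>j\<in>A. m j * y j)^2 \<le> (\<Sum>j\<in>A. \<bar>m j\<bar>) * (\<Sum>j\<in>A. \<bar>m j\<bar> * (y j)^2)"
proof -
  have "(\<Sum>j\<in>A. m j * y j)^2 \<le> (\<Sum>j\<in>A. \<bar>m j\<bar> * \<bar>y j\<bar>)^2"
  proof -
    have "\<bar>\<Sum>j\<in>A. m j * y j\<bar> \<le> (\<Sum>j\<in>A. \<bar>m j\<bar> * \<bar>y j\<bar>)"
      by (rule order_trans[OF sum_abs]) (simp add: abs_mult)
    thus ?thesis by (metis abs_ge_zero power2_abs power_mono)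
  qed
  also have "\<dots> = (\<Sum>j\<in>A. \<Sum>k\<in>A. (\<bar>m j\<bar> * \<bar>m k\<bar>) * (\<bar>y j\<bar> * \<bar>y k\<bar>))"
    by (simp add: power2_eq_square sum_product algebra_simps)
  also have "\<dots> \<le> (\<Sum>j\<in>A. \<Sum>k\<in>A. (\<bar>m j\<bar> * \<bar>m k\<bar>) * (((y j)^2 + (y k)^2) / 2))"
  proof (intro sum_mono mult_left_mono)
    fix j k
    have "0 \<le> (\<bar>y j\<bar> - \<bar>y k\<bar>)^2" by simp
    thus "\<bar>y j\<bar> * \<bar>y k\<bar> \<le> ((y j)^2 + (y k)^2) / 2"
      by (simp add: power2_diff)
  qed simp
  also have "\<dots> = (\<Sum>j\<in>A. \<Sum>k\<in>A. (\<bar>m j\<bar> * (y j)^2) * \<bar>m k\<bar>) / 2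
                 + (\<Sum>j\<in>A. \<Sum>k\<in>A. \<bar>m j\<bar> * (\<bar>m k\<bar> * (y k)^2)) / 2"
    by (simp add: sum_divide_distrib sum.distrib[symmetric] add_divide_distrib algebra_simps)
  also have "\<dots> = (\<Sum>j\<in>A. \<bar>m j\<bar>) * (\<Sum>j\<in>A. \<bar>m j\<bar> * (y j)^2)"
  proof -
    have 0: "(\<Sum>j\<in>A. \<Sum>k\<in>A. (\<bar>m j\<bar> * (y j)^2) * \<bar>m k\<bar>) = (\<Sum>j\<in>A. \<bar>m j\<bar> * (y j)^2) * (\<Sum>j\<in>A. \<bar>m j\<bar>)"
      by (simp only: sum_product)
    have 1: "(\<Sum>j\<in>A. \<Sum>k\<in>A. (\<bar>m j\<bar> * (y j)^2) * \<bar>m k\<bar>) = (\<Sum>j\<in>A. \<bar>m j\<bar>) * (\<Sum>j\<in>A. \<bar>m j\<bar> * (y j)^2)"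
      unfolding 0 by (rule mult.commute)
    have 2: "(\<Sum>j\<in>A. \<Sum>k\<in>A. \<bar>m j\<bar> * (\<bar>m k\<bar> * (y k)^2)) = (\<Sum>j\<in>A. \<bar>m j\<bar>) * (\<Sum>j\<in>A. \<bar>m j\<bar> * (y j)^2)"
      by (simp add: sum_product[symmetric])
    show ?thesis unfolding 1 2 by simp
  qed
  finally show ?thesis .
qed

lemma row_le: "(\<Sum>j\<in>UNIV. \<bar>c$i$j\<bar>) \<le> snorm (c::real^'n::finite^'n)"
  unfolding snorm_def by (rule order_trans[OF _ max.cobounded1]) (rule Max_ge, auto)

lemma col_le: "(\<Sum>i\<in>UNIV. \<bar>c$i$j\<bar>) \<le> snorm (c::real^'n::finite^'n)"
  unfolding snorm_def by (rule order_trans[OF _ max.cobounded2]) (rule Max_ge, auto)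

lemma snorm_nonneg: "0 \<le> snorm (c::real^'n::finite^'n)"
  by (rule order_trans[OF _ row_le]) (simp add: sum_nonneg)

lemma snorm_mono:
  fixes M N :: "real^'n::finite^'n"
  assumes "\<And>i j. \<bar>M$i$j\<bar> \<le> \<bar>N$i$j\<bar>"
  shows "snorm M \<le> snorm N"
proof -
  have r: "Max (range (\<lambda>i. \<Sum>j\<in>UNIV. \<bar>M$i$j\<bar>)) \<le> snorm N"
    by (subst Max_le_iff) (auto intro: order_trans[OF sum_mono row_le] assms)
  have c: "Max (range (\<lambda>j. \<Sum>i\<in>UNIV. \<bar>M$i$j\<bar>)) \<le> snorm N"
    by (subst Max_le_iff) (auto intro: order_trans[OF sum_mono col_le] assms)
  show ?thesis using r c unfolding snorm_def[of M] by simp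
qed

lemma schur:
  fixes M :: "real^'n::finite^'n"
  shows "norm (M *v x) \<le> snorm M * norm x"
proof -
  let ?S = "snorm M"
  have "(norm (M *v x))^2 = (\<Sum>i\<in>UNIV. ((M *v x)$i)^2)"
    unfolding power2_norm_eq_inner inner_vec_def by (simp add: power2_eq_square)
  also have "\<dots> \<le> (\<Sum>i\<in>UNIV. ?S * (\<Sum>j\<in>UNIV. \<bar>M$i$j\<bar> * (x$j)^2))"
  proof (rule sum_mono)
    fix i
    have "((M *v x)$i)^2 \<le> (\<Sum>j\<in>UNIV. \<bar>M$i$j\<bar>) * (\<Sum>j\<in>UNIV. \<bar>M$i$j\<bar> * (x$j)^2)"
      unfolding matrix_vector_mult_def by simp (rule wcs, simp)
    also have "\<dots> \<le> ?S * (\<Sum>j\<in>UNIV. \<bar>M$i$j\<bar> * (x$j)^2)"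
      by (rule mult_right_mono[OF row_le]) (simp add: sum_nonneg)
    finally show "((M *v x)$i)^2 \<le> ?S * (\<Sum>j\<in>UNIV. \<bar>M$i$j\<bar> * (x$j)^2)" .
  qed
  also have "\<dots> = ?S * (\<Sum>j\<in>UNIV. (\<Sum>i\<in>UNIV. \<bar>M$i$j\<bar>) * (x$j)^2)"
  proof -
    have sw: "(\<Sum>i\<in>UNIV. \<Sum>j\<in>UNIV. \<bar>M$i$j\<bar> * (x$j)^2) = (\<Sum>j\<in>UNIV. (\<Sum>i\<in>UNIV. \<bar>M$i$j\<bar>) * (x$j)^2)"
      by (subst sum.swap) (simp add: sum_distrib_right)
    show ?thesis by (simp only: sum_distrib_left[symmetric] sw)
  qed
  also have "\<dots> \<le> ?S * (\<Sum>j\<in>UNIV. ?S * (x$j)^2)"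
    by (intro mult_left_mono sum_mono mult_right_mono col_le snorm_nonneg) auto
  also have "\<dots> = ?S^2 * (norm x)^2"
    unfolding power2_norm_eq_inner inner_vec_def by (simp add: power2_eq_square sum_distrib_left algebra_simps)
  also have "\<dots> = (?S * norm x)^2" by (simp add: power_mult_distrib)
  finally have "(norm (M *v x))^2 \<le> (?S * norm x)^2" .
  thus ?thesis by (rule power2_le_imp_le) (simp add: snorm_nonneg)
qed

lemma inv_bound:
  fixes A :: "real^'n::finite^'n"
  assumes L: "0 < L" and pd: "\<And>x. L * (x \<bullet> x) \<le> x \<bullet> (A *v x)"
  shows "invertible A" "\<And>y. norm (matrix_inv A *v y) \<le> norm y / L"
proof -
  have "\<forall>x. A *v x = 0 \<longrightarrow> x = 0"
  proof (intro allI impI)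
    fix x assume "A *v x = 0"
    hence "L * (x \<bullet> x) \<le> 0" using pd[of x] by simp
    hence "x \<bullet> x \<le> 0" using L by (simp add: mult_le_0_iff)
    thus "x = 0" by (metis antisym inner_ge_zero inner_eq_zero_iff)
  qed
  hence "\<exists>B. B ** A = mat 1" by (simp add: matrix_left_invertible_ker)
  thus inv: "invertible A" by (simp add: invertible_left_inverse)
  fix y
  let ?x = "matrix_inv A *v y"
  have Ax: "A *v ?x = y"
    by (simp add: matrix_vector_mul_assoc matrix_inv_props(1)[OF inv])
  have "L * (norm ?x)^2 \<le> norm ?x * norm y"
    using pd[of ?x] norm_cauchy_schwarz[of ?x y] unfolding Ax by (simp add: power2_norm_eq_inner)
  hence "L * norm ?x \<le> norm y"
    by (cases "norm ?x = 0") (auto simp: power2_eq_square)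
  thus "norm (matrix_inv A *v y) \<le> norm y / L" using L by (simp add: field_simps)
qed



lemma diag_left: "((\<chi> i j. if i = j then d i else 0) ** (N::real^'n::finite^'n)) $ i $ j = d i * N$i$j"
    unfolding matrix_matrix_mult_def
    by (simp add: if_distrib[where f="\<lambda>x. x * _"] cong: if_cong)

lemma diag_vec: "(\<chi> i j. if i = j then d i else 0) *v (y::real^'n::finite) = (\<chi> i. d i * y$i)"
    unfolding matrix_vector_mult_def
    by (simp add: if_distrib[where f="\<lambda>x. x * _"] cong: if_cong)



theorem lemma4p5:
  fixes lam :: "'n::{finite,linorder} \<Rightarrow> real"
    and a b :: "real^'n::{finite,linorder}^'n::{finite,linorder}" and L0 L1 t :: real and w w' :: "real^'n::{finite,linorder}"
  assumes lam_pos: "\<forall>i. 0 < lam i"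
    and lam_mono: "\<forall>i j. i \<le> j \<longrightarrow> lam i \<le> lam j"
    and L0: "0 < L0" and L01: "L0 \<le> L1"
    and a_sym: "transpose a = a" and b_sym: "transpose b = b"
    and a_bd: "loewner_between L0 a L1" and b_bd: "loewner_between L0 b L1"
    and t: "0 < t"
  shows "opnorm (atilde lam t a - atilde lam t b) \<le> snorm (atilde lam t a - atilde lam t b)
       \<and> snorm (atilde lam t a - atilde lam t b) \<le> snorm (a - b)
       \<and> opnorm (Atilde lam t a - Atilde lam t b) \<le> snorm (a - b) / L0\<^sup>2
       \<and> \<bar>w \<bullet> ((Atilde lam t a - Atilde lam t b) *v w')\<bar> \<le> norm w * norm w' * snorm (a - b) / L0\<^sup>2"
proof -
  define F where "F = FF lam t"
  have Fpos: "\<And>i j. 0 < F i j" unfolding F_def by (rule FF_pos[OF lam_pos t])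
  have CS: "\<And>i j. (F i j)^2 \<le> F i i * F j j" unfolding F_def by (rule FF_CS[OF lam_pos t])
  define Dinv where "Dinv = (\<chi> i j. if i = j then 1 / F i i else 0)"
  have gdiag: "gmat lam t = (\<chi> i j. if i = j then F i i else 0)"
    by (simp add: vec_eq_iff gmat_entry F_def)
  have g1: "gmat lam t ** Dinv = mat 1"
    unfolding gdiag Dinv_def by (simp add: vec_eq_iff diag_left mat_def) (use Fpos in \<open>simp add: less_imp_neq[symmetric]\<close>)
  have g2: "Dinv ** gmat lam t = mat 1"
    unfolding gdiag Dinv_def by (simp add: vec_eq_iff diag_left mat_def) (use Fpos in \<open>simp add: less_imp_neq[symmetric]\<close>)
  have ginv: "invertible (gmat lam t)" unfolding invertible_def using g1 g2 by blast
  have "Gmat lam t = Dinv"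
  proof -
    have "Gmat lam t = Gmat lam t ** (gmat lam t ** Dinv)" by (simp add: g1)
    also have "\<dots> = Dinv" unfolding Gmat_def matrix_mul_assoc matrix_inv_props(2)[OF ginv] by simp
    finally show ?thesis .
  qed
  define d where "d i = sqrt (1 / F i i)" for i
  have dpos: "\<And>i. 0 < d i" unfolding d_def using Fpos by simp
  have Gs: "Gsqrt lam t = (\<chi> i j. if i = j then d i else 0)"
    unfolding Gsqrt_def \<open>Gmat lam t = Dinv\<close> Dinv_def d_def by (simp add: vec_eq_iff)
  have at: "\<And>c. atilde lam t c = (\<chi> i j. if i = j then d i else 0) ** amat lam t c ** (\<chi> i j. if i = j then d i else 0)"
    unfolding atilde_def Gs ..
  have ate: "\<And>c i j. atilde lam t c $ i $ j = (d i * F i j * d j) * c$i$j"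
    unfolding at diag_mult_entry amat_entry F_def by simp
  have dF: "\<And>i j. d i * F i j * d j \<le> 1"
  proof -
    fix i j
    have "d i * d j * sqrt (F i i * F j j) = 1"
      unfolding d_def using Fpos[of i i] Fpos[of j j]
      by (simp add: real_sqrt_mult[symmetric])
    moreover have "F i j \<le> sqrt (F i i * F j j)" by (rule real_le_rsqrt[OF CS])
    ultimately have "F i j * (d i * d j) \<le> 1"
      using mult_right_mono[of "F i j" "sqrt (F i i * F j j)" "d i * d j"] dpos[of i] dpos[of j]
      by (simp add: mult.commute)
    thus "d i * F i j * d j \<le> 1" by (simp add: algebra_simps)
  qed
  have entry1: "\<And>i j. \<bar>(atilde lam t a - atilde lam t b)$i$j\<bar> \<le> \<bar>(a - b)$i$j\<bar>"
  proof -
    fix i j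
    have "\<bar>(atilde lam t a - atilde lam t b)$i$j\<bar> = (d i * F i j * d j) * \<bar>(a - b)$i$j\<bar>"
      using dpos[of i] dpos[of j] Fpos[of i j]
      by (simp add: ate abs_mult right_diff_distrib[symmetric])
    also have "\<dots> \<le> \<bar>(a - b)$i$j\<bar>" using dF[of i j] dpos[of i] dpos[of j] Fpos[of i j]
      by (intro mult_left_le_one_le) auto
    finally show "\<bar>(atilde lam t a - atilde lam t b)$i$j\<bar> \<le> \<bar>(a - b)$i$j\<bar>" .
  qed
  have entry2: "\<And>i j. \<bar>(atilde lam t b - atilde lam t a)$i$j\<bar> \<le> \<bar>(a - b)$i$j\<bar>"
    using entry1 by (simp add: abs_minus_commute)
  have S1: "snorm (atilde lam t a - atilde lam t b) \<le> snorm (a - b)" by (rule snorm_mono[OF entry1])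
  have S2: "snorm (atilde lam t b - atilde lam t a) \<le> snorm (a - b)" by (rule snorm_mono[OF entry2])
  have O1: "opnorm (atilde lam t a - atilde lam t b) \<le> snorm (atilde lam t a - atilde lam t b)"
    unfolding opnorm_def by (rule onorm_le) (rule schur)
  have am1: "amat lam t (mat 1) = gmat lam t"
    by (simp add: vec_eq_iff amat_entry gmat_entry mat_def)
  have pd: "\<And>x. L0 * (x \<bullet> x) \<le> x \<bullet> (atilde lam t c *v x)" if cbd: "loewner_between L0 c L1" for c
  proof -
    fix x
    define y where "y = (\<chi> i. d i * x$i)"
    have q: "x \<bullet> (atilde lam t c *v x) = y \<bullet> (amat lam t c *v y)"
      unfolding at y_def by (rule quad_diag)
    note I1 = quad_amat[OF lam_pos less_imp_le[OF t], of y c]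
    note I2 = has_integral_mult_right[OF quad_amat[OF lam_pos less_imp_le[OF t], of y "mat 1"], of L0]
    have le: "L0 * (y \<bullet> (amat lam t (mat 1) *v y)) \<le> y \<bullet> (amat lam t c *v y)"
      by (rule has_integral_le[OF I2 I1]) (use cbd in \<open>simp add: loewner_between_def\<close>)
    have "y \<bullet> (amat lam t (mat 1) *v y) = x \<bullet> x"
    proof -
      have "y \<bullet> (amat lam t (mat 1) *v y) = (\<Sum>i\<in>UNIV. (d i * d i * F i i) * (x$i * x$i))"
        unfolding am1 gdiag diag_vec y_def by (simp add: inner_vec_def algebra_simps)
      also have "\<dots> = (\<Sum>i\<in>UNIV. x$i * x$i)"
      proof (rule sum.cong[OF refl])
        fix i
        have "d i * d i * F i i = 1" unfolding d_def using Fpos[of i i]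
          by (simp flip: power2_eq_square)
        thus "d i * d i * F i i * (x $ i * x $ i) = x $ i * x $ i" by simp
      qed
      also have "\<dots> = x \<bullet> x" by (simp add: inner_vec_def)
      finally show ?thesis .
    qed
    thus "L0 * (x \<bullet> x) \<le> x \<bullet> (atilde lam t c *v x)" using le q by simp
  qed
  have pa: "\<And>x. L0 * (x \<bullet> x) \<le> x \<bullet> (atilde lam t a *v x)" by (rule pd[OF a_bd])
  have pb: "\<And>x. L0 * (x \<bullet> x) \<le> x \<bullet> (atilde lam t b *v x)" by (rule pd[OF b_bd])
  note ia = inv_bound[OF L0 pa] and ib = inv_bound[OF L0 pb]
  have key: "\<And>y. norm ((Atilde lam t a - Atilde lam t b) *v y) \<le> snorm (a - b) / L0\<^sup>2 * norm y"
  proof -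
    fix y
    let ?Aa = "Atilde lam t a" and ?Ab = "Atilde lam t b" and ?a = "atilde lam t a" and ?b = "atilde lam t b"
    have eq: "(?Aa - ?Ab) *v y = ?Aa *v ((?b - ?a) *v (?Ab *v y))"
    proof -
      have za: "\<And>z. ?Aa *v (?a *v z) = z"
        unfolding Atilde_def by (simp add: matrix_vector_mul_assoc matrix_inv_props[OF ia(1)])
      have zb: "\<And>z. ?b *v (?Ab *v z) = z"
        unfolding Atilde_def by (simp add: matrix_vector_mul_assoc matrix_inv_props[OF ib(1)])
      have 1: "?Aa *v (?b *v (?Ab *v y)) = ?Aa *v y" by (simp only: zb)
      have 2: "?Aa *v (?a *v (?Ab *v y)) = ?Ab *v y" by (simp only: za)
      show ?thesis by (simp add: algebra_simps 1 2)
    qed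
    have "norm ((?Aa - ?Ab) *v y) \<le> norm ((?b - ?a) *v (?Ab *v y)) / L0"
      by (subst eq) (unfold Atilde_def, rule ia(2))
    also have "\<dots> \<le> snorm (a - b) * norm (?Ab *v y) / L0"
      using L0 by (intro divide_right_mono order_trans[OF schur] mult_right_mono S2) auto
    also have "\<dots> \<le> snorm (a - b) * (norm y / L0) / L0"
      using L0 snorm_nonneg[of "a - b"] ib(2)[of y] unfolding Atilde_def
      by (intro divide_right_mono mult_left_mono) auto
    also have "\<dots> = snorm (a - b) / L0\<^sup>2 * norm y" by (simp add: power2_eq_square field_simps)
    finally show "norm ((?Aa - ?Ab) *v y) \<le> snorm (a - b) / L0\<^sup>2 * norm y" .
  qed
  have O2: "opnorm (Atilde lam t a - Atilde lam t b) \<le> snorm (a - b) / L0\<^sup>2"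
    unfolding opnorm_def by (rule onorm_le) (rule key)
  have W: "\<bar>w \<bullet> ((Atilde lam t a - Atilde lam t b) *v w')\<bar> \<le> norm w * norm w' * snorm (a - b) / L0\<^sup>2"
  proof -
    have "\<bar>w \<bullet> ((Atilde lam t a - Atilde lam t b) *v w')\<bar> \<le> norm w * norm ((Atilde lam t a - Atilde lam t b) *v w')"
      by (rule Cauchy_Schwarz_ineq2)
    also have "\<dots> \<le> norm w * (snorm (a - b) / L0\<^sup>2 * norm w')"
      by (rule mult_left_mono[OF key norm_ge_zero])
    finally show ?thesis by (simp add: field_simps)
  qed
  show ?thesis using O1 S1 O2 W by blast
qed


end
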